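(* Consider the downlink RIS-aided multi-cell network with directional transmissions described in the context, with unit training overhead $\beta \in \left[0, \frac{T}{M_\text{B}M_\text{R}M_\text{U}+M_\text{B}M_\text{U}}\right)$. Its coverage probability has the form $$\mathcal{P}(\beta) = K\, p_{\text{E}_\text{B}}(\sigma_\text{B}, \theta_\text{B})\, p_{\text{E}_\text{U}}(\sigma_\text{U}, \theta_\text{U}),$$ where $K>0$ does not depend on $\beta$, and $p_{\text{E}_j}$, $\sigma_j$, $\theta_j$ ($j\in\{\text{B},\text{U}\}$) are as defined in the context. Then $\mathcal{P}$ is a monotonically increasing function of the unit training overhead $\beta$.
   Context: Base stations (BSs) and user equipments (UEs) carry uniform linear arrays with $M_\text{B}\ge 1$ and $M_\text{U}\ge 1$ antennas; each reconfigurable intelligent surface (RIS) has $M_\text{R}$ reflecting elements. Beams follow a sectored model with beamwidth $\theta_j = 4/M_j$ (radians) and main-lobe gain $N_j = 2\pi/\theta_j$, $j\in\{\text{B},\text{U}\}$. A frame of length $T$ is split into a channel estimation phase of length $T_\text{E} = \beta(M_\text{B}M_\text{R}M_\text{U}+M_\text{B}M_\text{U})$ and a data phase of length $T_\text{D}=T-T_\text{E}$, where $\beta \in [0, T/(M_\text{B}M_\text{R}M_\text{U}+M_\text{B}M_\text{U}))$ is the unit training overhead (training symbols per antenna-to-antenna/element path). With average channel signal-to-noise ratio $\text{SNR}>0$, the MMSE channel estimation error variance is $\sigma_\text{E}^2 = \frac{1}{1+\beta\,\text{SNR}}$. The beam alignment error $\varepsilon_j$ of end $j$ is a zero-mean Gaussian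 truncated to $[-\pi,\pi]$ with variance parameter $\sigma_j^2 = k_j\pi^2\sigma_\text{E}^2$, where $k_j\in(0,1]$. The probability that the alignment error is at most half the beamwidth is $$p_{\text{E}_j}(\sigma_j,\theta_j) = \mathbb{P}[|\varepsilon_j|\le \theta_j/2] = \frac{\operatorname{erf}\!\left(\frac{\theta_j}{2\sqrt{2\sigma_j^2}}\right)}{\operatorname{erf}\!\left(\frac{\pi}{\sqrt{2\sigma_j^2}}\right)}.$$ The coverage probability is $\mathcal{P}=\mathbb{P}[\text{SINR}>\tau]$ for the typical user at a threshold $\tau$; the serving link has total beamforming gain $N_\text{B}N_\text{U}$ with probability $p_{\text{E}_\text{B}}p_{\text{E}_\text{U}}$ and $0$ otherwise, and all other factors of $\mathcal{P}$ (network geometry, blockage, interference, noise) are collected into the constant $K>0$ independent of $\beta$. *)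

theory Defs
  imports "HOL-Analysis.Analysis"
begin

definition erf :: "real \<Rightarrow> real" where
  "erf x = 2 / sqrt pi * (LBINT t=0..x. exp (- (t^2)))"

definition beamwidth :: "nat \<Rightarrow> real" where
  "beamwidth M = 4 / real M"

definition mainlobe_gain :: "nat \<Rightarrow> real" where
  "mainlobe_gain M = 2 * pi / beamwidth M"

definition est_err_var :: "real \<Rightarrow> real \<Rightarrow> real" where
  "est_err_var SNR \<beta> = 1 / (1 + \<beta> * SNR)"

definition align_var :: "real \<Rightarrow> real \<Rightarrow> real \<Rightarrow> real" where
  "align_var k SNR \<beta> = k * pi^2 * est_err_var SNR \<beta>"

text \<open>p_E(sigma, theta) = P[|eps| <= theta/2] for zero-mean Gaussian truncated to [-pi,pi],
  given in terms of the variance parameter sigma^2.\<close>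
definition p_E :: "real \<Rightarrow> real \<Rightarrow> real" where
  "p_E sigma2 \<theta> = erf (\<theta> / (2 * sqrt (2 * sigma2))) / erf (pi / sqrt (2 * sigma2))"

definition coverage :: "real \<Rightarrow> real \<Rightarrow> real \<Rightarrow> real \<Rightarrow> nat \<Rightarrow> nat \<Rightarrow> real \<Rightarrow> real" where
  "coverage K SNR kB kU MB MU \<beta> =
     K * p_E (align_var kB SNR \<beta>) (beamwidth MB) * p_E (align_var kU SNR \<beta>) (beamwidth MU)"

end

theory Submission
  imports Defs
begin

definition E :: "real \<Rightarrow> real" where "E x = (LBINT t=0..x. exp (- (t^2)))"

lemma E_deriv: "(E has_real_derivative exp (- (x^2))) (at x)"
proof -
  define a where "a = -(\<bar>x\<bar>+1)"
  define b where "b = \<bar>x\<bar>+1"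
  have "((\<lambda>u. LBINT y=0..u. exp (- (y^2))) has_vector_derivative exp (- (x^2))) (at x within {a..b})"
  proof -
    have "((\<lambda>u. LBINT y=ereal 0..u. exp (- (y^2))) has_vector_derivative exp (- (x^2))) (at x within {a..b})"
      by (rule interval_integral_FTC2) (auto simp: a_def b_def intro!: continuous_intros)
    then show ?thesis by (simp add: zero_ereal_def)
  qed
  moreover have "at x within {a..b} = at x"
    by (rule at_within_Icc_at) (auto simp: a_def b_def)
  ultimately show ?thesis
    by (simp add: E_def[abs_def] has_real_derivative_iff_has_vector_derivative)
qed

lemma E_deriv_chain[derivative_intros]:
  "(f has_real_derivative f') (at x within s) \<Longrightarrow>
   ((\<lambda>x. E (f x)) has_real_derivative exp (- ((f x)^2)) * f') (at x within s)"
  using DERIV_chain2[OF E_deriv] by blast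

lemma E_cont: "continuous_on S E"
  using E_deriv by (meson DERIV_isCont continuous_at_imp_continuous_on)

lemma E_isCont[continuous_intros]: "isCont f t \<Longrightarrow> isCont (\<lambda>x. E (f x)) t"
  by (rule isCont_o2[OF _ DERIV_isCont[OF E_deriv]])

lemma E_0[simp]: "E 0 = 0" by (simp add: E_def zero_ereal_def[symmetric])

lemma E_strict: "x < y \<Longrightarrow> E x < E y"
  by (rule DERIV_pos_imp_increasing) (auto intro: E_deriv)

lemma E_pos: "x > 0 \<Longrightarrow> E x > 0"
  using E_strict[of 0 x] by simp

definition H :: "real \<Rightarrow> real" where "H x = x * exp (- (x^2)) - (1 - 2*x^2) * E x"

lemma H_deriv: "(H has_real_derivative 4 * x * E x) (at x)"
  unfolding H_def
  by (rule derivative_eq_intros refl | simp)+ (simp add: algebra_simps power2_eq_square)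

lemma H_nonneg: "x \<ge> 0 \<Longrightarrow> H x \<ge> 0"
proof -
  assume x: "x \<ge> 0"
  have "H 0 \<le> H x"
    apply (rule DERIV_nonneg_imp_increasing_open[OF x])
    using H_deriv E_pos apply (metis less_eq_real_def mult_nonneg_nonneg zero_le_numeral)
    using H_deriv by (meson DERIV_isCont continuous_at_imp_continuous_on)
  then show ?thesis by (simp add: H_def)
qed

definition G :: "real \<Rightarrow> real" where "G x = E x * exp (x^2) / x"

lemma G_deriv: "x > 0 \<Longrightarrow> (G has_real_derivative exp (x^2) * H x / x^2) (at x)"
  unfolding G_def
  apply (rule derivative_eq_intros refl | simp)+
  apply (simp add: H_def field_simps power2_eq_square mult_exp_exp)
  done

lemma G_mono: "0 < x \<Longrightarrow> x \<le> y \<Longrightarrow> G x \<le> G y"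
proof -
  assume x: "0 < x" "x \<le> y"
  show ?thesis
  proof (rule DERIV_nonneg_imp_increasing_open[OF x(2)])
    fix t assume t: "x < t" "t < y"
    then have "t > 0" using x by simp
    then show "\<exists>d. (G has_real_derivative d) (at t) \<and> 0 \<le> d"
      using G_deriv H_nonneg by (intro exI[of _ "exp (t^2) * H t / t^2"]) auto
  next
    have "\<forall>t\<in>{x..y}. isCont G t"
      using G_deriv x by (meson DERIV_isCont atLeastAtMost_iff less_le_trans)
    then show "continuous_on {x..y} G" by (simp add: continuous_at_imp_continuous_on)
  qed
qed

lemma key_ineq:
  assumes "0 < c1" "c1 \<le> c2" "0 < a"
  shows "E (c1*a) * (exp (- ((c2*a)^2)) * c2) \<le> exp (- ((c1*a)^2)) * c1 * E (c2*a)"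
proof -
  define x where "x = c1*a"
  define y where "y = c2*a"
  have x: "0 < x" "x \<le> y" using assms by (auto simp: x_def y_def)
  have "G x \<le> G y" using G_mono x by simp
  then have "E x * exp (x^2) * y \<le> E y * exp (y^2) * x"
    using x by (simp add: G_def divide_simps)
  then have "(E x * exp (x^2) * y) * (exp (-(x^2)) * exp (-(y^2))) \<le> (E y * exp (y^2) * x) * (exp (-(x^2)) * exp (-(y^2)))"
    by (rule mult_right_mono) simp
  then have "E x * y * exp (-(y^2)) \<le> E y * x * exp (-(x^2))"
    by (simp add: exp_minus field_simps)
  then have "(E x * exp (-(y^2)) * c2) * a \<le> (exp (-(x^2)) * c1 * E y) * a"
    by (simp add: x_def y_def algebra_simps)
  then show ?thesis using assms by (simp add: x_def y_def)
qed

definition phi :: "real \<Rightarrow> real \<Rightarrow> real \<Rightarrow> real" where "phi c1 c2 a = E (c1*a) / E (c2*a)"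

lemma phi_mono:
  assumes "0 < c1" "c1 \<le> c2" "0 < a" "a \<le> b"
  shows "phi c1 c2 a \<le> phi c1 c2 b"
proof (rule DERIV_nonneg_imp_increasing_open[OF assms(4)])
  fix t assume t: "a < t" "t < b"
  then have t0: "t > 0" using assms by simp
  have pos: "E (c2*t) > 0" using assms t0 by (intro E_pos) simp
  have "(phi c1 c2 has_real_derivative
     (exp (- ((c1*t)^2)) * (c1 * 1) * E (c2*t) - E (c1*t) * (exp (- ((c2*t)^2)) * (c2 * 1))) / (E (c2*t) * E (c2*t))) (at t)"
    unfolding phi_def[abs_def]
    by (rule derivative_eq_intros refl | use pos in simp)+
  moreover have "0 \<le> (exp (- ((c1*t)^2)) * (c1 * 1) * E (c2*t) - E (c1*t) * (exp (- ((c2*t)^2)) * (c2 * 1))) / (E (c2*t) * E (c2*t))"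
    using key_ineq[OF assms(1,2) t0] by simp
  ultimately show "\<exists>d. (phi c1 c2 has_real_derivative d) (at t) \<and> 0 \<le> d" by blast
next
  have "\<forall>t\<in>{a..b}. isCont (phi c1 c2) t"
  proof
    fix t assume "t \<in> {a..b}"
    then have "t > 0" using assms by simp
    then have "E (c2*t) \<noteq> 0" using assms E_pos[of "c2*t"] by simp
    then show "isCont (phi c1 c2) t"
      unfolding phi_def[abs_def]
      by (intro continuous_intros) auto
  qed
  then show "continuous_on {a..b} (phi c1 c2)" by (simp add: continuous_at_imp_continuous_on)
qed

lemma erf_E: "erf x = 2 / sqrt pi * E x"
  by (simp add: erf_def E_def)

lemma p_E_phi:
  assumes "s > 0"
  shows "p_E s th = phi (th/2) pi (1 / sqrt (2 * s))"
proof -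
  have "th / (2 * sqrt (2 * s)) = th/2 * (1 / sqrt (2 * s))" "pi / sqrt (2 * s) = pi * (1 / sqrt (2 * s))"
    by simp_all
  then show ?thesis
    unfolding p_E_def phi_def erf_E by simp
qed

lemma pE_mono_beta:
  assumes M: "M \<ge> 1" and SNR: "SNR > 0" and k: "k > 0"
    and b: "0 \<le> b1" "b1 \<le> b2"
  shows "p_E (align_var k SNR b1) (beamwidth M) \<le> p_E (align_var k SNR b2) (beamwidth M)"
    and "0 \<le> p_E (align_var k SNR b1) (beamwidth M)"
proof -
  define s1 where "s1 = align_var k SNR b1"
  define s2 where "s2 = align_var k SNR b2"
  have d1: "1 + b1 * SNR > 0" "1 + b2 * SNR > 0" using b SNR by (auto intro: add_pos_nonneg)
  have le: "1 + b1 * SNR \<le> 1 + b2 * SNR" using b SNR by (simp add: mult_right_mono)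
  have s1: "s1 > 0" and s2: "s2 > 0" using d1 k by (auto simp: s1_def s2_def align_var_def est_err_var_def)
  have "s2 \<le> s1" unfolding s1_def s2_def align_var_def est_err_var_def
    using d1 le k by (intro mult_left_mono) (auto simp: divide_simps)
  then have "sqrt (2 * s2) \<le> sqrt (2 * s1)" by simp
  then have a: "1 / sqrt (2 * s1) \<le> 1 / sqrt (2 * s2)" using s2
    by (intro divide_left_mono) auto
  have a0: "0 < 1 / sqrt (2 * s1)" using s1 by simp
  have th: "0 < beamwidth M / 2" "beamwidth M / 2 \<le> pi"
  proof -
    have "real M \<ge> 1" using M by simp
    then have "beamwidth M / 2 \<le> 2" by (simp add: beamwidth_def divide_simps)
    also have "2 \<le> pi" using pi_gt3 by simp
    finally show "beamwidth M / 2 \<le> pi" .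
    show "0 < beamwidth M / 2" using M by (simp add: beamwidth_def)
  qed
  show "p_E (align_var k SNR b1) (beamwidth M) \<le> p_E (align_var k SNR b2) (beamwidth M)"
    using phi_mono[OF th a0 a] s1 s2 by (simp add: p_E_phi s1_def[symmetric] s2_def[symmetric])
  show "0 \<le> p_E (align_var k SNR b1) (beamwidth M)"
    using s1 th a0 E_pos[of "beamwidth M / 2 * (1 / sqrt (2 * s1))"] E_pos[of "pi * (1 / sqrt (2 * s1))"]
    by (simp add: p_E_phi s1_def[symmetric] phi_def)
qed

theorem corollary1:
  fixes T SNR K kB kU :: real and MB MU MR :: nat
  assumes "MB \<ge> 1" and "MU \<ge> 1" and "MR \<ge> 1"
    and "SNR > 0" and "K > 0"
    and "0 < kB" and "kB \<le> 1" and "0 < kU" and "kU \<le> 1"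
  shows "mono_on {0..<T / real (MB * MR * MU + MB * MU)} (coverage K SNR kB kU MB MU)"
proof (rule mono_onI)
  fix r s assume rs: "r \<in> {0..<T / real (MB * MR * MU + MB * MU)}" "s \<in> {0..<T / real (MB * MR * MU + MB * MU)}" "r \<le> s"
  then have r0: "0 \<le> r" by simp
  note B = pE_mono_beta[OF assms(1) assms(4) assms(6) r0 rs(3)]
  note U = pE_mono_beta[OF assms(2) assms(4) assms(8) r0 rs(3)]
  have s0: "0 \<le> s" using r0 rs by simp
  note B2 = pE_mono_beta(2)[OF assms(1) assms(4) assms(6) s0 order_refl]
  have "K * p_E (align_var kB SNR r) (beamwidth MB) \<le> K * p_E (align_var kB SNR s) (beamwidth MB)"
    using B assms(5) by simp
  then show "coverage K SNR kB kU MB MU r \<le> coverage K SNR kB kU MB MU s"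
    unfolding coverage_def
    using U B B2 assms(5) by (intro mult_mono) auto
qed

end
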